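(* Let $H$ be a complex Hilbert space. Then: (1) if $\varphi_1,\varphi_2,\psi_1,\psi_2\in C[0,1]$ are real-valued, then for every $t\in[0,1]$, $$|n_t(\varphi_1,\psi_1;H)-n_t(\varphi_2,\psi_2;H)|\le|\varphi_1(t)-\varphi_2(t)|+|\psi_1(t)-\psi_2(t)|;$$ (2) if $\varphi,\psi,\varphi_n,\psi_n\in C[0,1]$ are real-valued and $\varphi_n\to\varphi$, $\psi_n\to\psi$ (pointwise on $[0,1]$), then for every $t\in[0,1]$, $n_t(\varphi,\psi;H)=\lim_{n\to\infty}n_t(\varphi_n,\psi_n;H)$.
   Context: $S_1(H)$ is the unit sphere of $H$; for real $\varphi,\psi$ on $[0,1]$, $\omega_t(\varphi,\psi;A)=\sup_{x\in S_1(H)}|\langle(\varphi(t)A+\psi(t)A^* )x,x\rangle|$, and the weighted numerical index is $n_t(\varphi,\psi;H)=\inf\{\omega_t(\varphi,\psi;A):A\in\mathbb{B}(H),\ \|A\|=1\}$. *)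

theory Defs
  imports "HOL-Analysis.Analysis"
begin

text \<open>A complex Hilbert space is such a space which is moreover complete.\<close>

class complex_inner = real_normed_vector +
  fixes scaleC :: "complex \<Rightarrow> 'a \<Rightarrow> 'a" (infixr \<open>*\<^sub>C\<close> 75)
    and cinner :: "'a \<Rightarrow> 'a \<Rightarrow> complex"
  assumes scaleC_add_right: "a *\<^sub>C (x + y) = a *\<^sub>C x + a *\<^sub>C y"
    and scaleC_add_left: "(a + b) *\<^sub>C x = a *\<^sub>C x + b *\<^sub>C x"
    and scaleC_scaleC: "a *\<^sub>C (b *\<^sub>C x) = (a * b) *\<^sub>C x"
    and scaleC_one: "1 *\<^sub>C x = x"
    and scaleC_of_real: "complex_of_real r *\<^sub>C x = r *\<^sub>R x"
    and cinner_commute: "cinner x y = cnj (cinner y x)"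
    and cinner_add_left: "cinner (x + y) z = cinner x z + cinner y z"
    and cinner_scaleC_left: "cinner (a *\<^sub>C x) y = a * cinner x y"
    and norm_eq_sqrt_cinner: "norm x = sqrt (Re (cinner x x))"

definition bounded_clinear_op :: "('a::complex_inner \<Rightarrow> 'a) \<Rightarrow> bool" where
  "bounded_clinear_op A \<longleftrightarrow>
     (\<forall>x y. A (x + y) = A x + A y) \<and> (\<forall>c x. A (c *\<^sub>C x) = c *\<^sub>C A x) \<and>
     (\<exists>K. \<forall>x. norm (A x) \<le> norm x * K)"

definition adjoint_op :: "('a::complex_inner \<Rightarrow> 'a) \<Rightarrow> ('a \<Rightarrow> 'a)" where
  "adjoint_op A = (SOME B. \<forall>x y. cinner (A x) y = cinner x (B y))"

definition omega_t :: "real \<Rightarrow> (real \<Rightarrow> real) \<Rightarrow> (real \<Rightarrow> real) \<Rightarrow> ('a::complex_inner \<Rightarrow> 'a) \<Rightarrow> real" where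
  "omega_t t \<phi> \<psi> A =
     Sup {cmod (cinner (\<phi> t *\<^sub>R A x + \<psi> t *\<^sub>R adjoint_op A x) x) | x. norm x = 1}"

definition num_index_t :: "'a::complex_inner itself \<Rightarrow> real \<Rightarrow> (real \<Rightarrow> real) \<Rightarrow> (real \<Rightarrow> real) \<Rightarrow> real" where
  "num_index_t H t \<phi> \<psi> =
     Inf {omega_t t \<phi> \<psi> (A :: 'a \<Rightarrow> 'a) | A. bounded_clinear_op A \<and> onorm A = 1}"

end

theory Submission
  imports Defs
begin


lemma scaleC_zero_left[simp]: "(0::complex) *\<^sub>C (x::'a::complex_inner) = 0"
  using scaleC_of_real[of 0 x] by simp

lemma scaleC_real: "complex_of_real r *\<^sub>C (x::'a::complex_inner) = r *\<^sub>R x"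
  by (rule scaleC_of_real)

lemma scaleC_minus_left: "(- c) *\<^sub>C (x::'a::complex_inner) = - (c *\<^sub>C x)"
  using scaleC_add_left[of c "-c" x] by (simp add: eq_neg_iff_add_eq_0 add.commute)

lemma scaleC_diff_left: "(a - b) *\<^sub>C (x::'a::complex_inner) = a *\<^sub>C x - b *\<^sub>C x"
  using scaleC_add_left[of a "-b" x] by (simp add: scaleC_minus_left)

lemma scaleC_zero_right[simp]: "c *\<^sub>C (0::'a::complex_inner) = 0"
  using scaleC_add_right[of c 0 0] by simp

lemma scaleC_minus_right: "c *\<^sub>C (- x::'a::complex_inner) = - (c *\<^sub>C x)"
  using scaleC_add_right[of c x "-x"] by (simp add: eq_neg_iff_add_eq_0 add.commute)

lemma scaleC_diff_right: "c *\<^sub>C (x - y::'a::complex_inner) = c *\<^sub>C x - c *\<^sub>C y"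
  using scaleC_add_right[of c x "-y"] by (simp add: scaleC_minus_right)

lemma cinner_zero_left[simp]: "cinner (0::'a::complex_inner) y = 0"
  using cinner_add_left[of 0 0 y] by simp

lemma cinner_minus_left: "cinner (- x::'a::complex_inner) y = - cinner x y"
  using cinner_add_left[of x "-x" y] by (simp add: eq_neg_iff_add_eq_0 add.commute)

lemma cinner_diff_left: "cinner (x - y::'a::complex_inner) z = cinner x z - cinner y z"
  using cinner_add_left[of x "-y" z] by (simp add: cinner_minus_left)

lemma cinner_add_right: "cinner (x::'a::complex_inner) (y + z) = cinner x y + cinner x z"
  by (metis cinner_add_left cinner_commute complex_cnj_add)

lemma cinner_zero_right[simp]: "cinner (x::'a::complex_inner) 0 = 0"
  by (metis cinner_commute cinner_zero_left complex_cnj_zero)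

lemma cinner_diff_right: "cinner (x::'a::complex_inner) (y - z) = cinner x y - cinner x z"
  by (metis cinner_diff_left cinner_commute complex_cnj_diff)

lemma cinner_scaleC_right: "cinner (x::'a::complex_inner) (a *\<^sub>C y) = cnj a * cinner x y"
  by (metis cinner_scaleC_left cinner_commute complex_cnj_mult)

lemma cinner_scaleR_left: "cinner (r *\<^sub>R x::'a::complex_inner) y = complex_of_real r * cinner x y"
  by (metis cinner_scaleC_left scaleC_of_real)

lemma cinner_self: "cinner (x::'a::complex_inner) x = complex_of_real ((norm x)^2)"
proof -
  have im: "Im (cinner x x) = 0" using cinner_commute[of x x]
    by (metis Im_complex_of_real Reals_cnj_iff complex_is_Real_iff)
  have "norm x = sqrt (Re (cinner x x))" by (rule norm_eq_sqrt_cinner)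
  moreover have "Re (cinner x x) \<ge> 0"
    by (metis calculation norm_ge_zero real_sqrt_ge_0_iff)
  ultimately have "Re (cinner x x) = (norm x)^2" by simp
  with im show ?thesis by (simp add: complex_eq_iff)
qed

lemma expand: "cinner (x + a *\<^sub>C y) (x + a *\<^sub>C y :: 'a::complex_inner)
   = complex_of_real ((norm x)^2) + cnj a * cinner x y + a * cnj (cinner x y)
     + complex_of_real ((cmod a)^2 * (norm y)^2)"
proof -
  have "cinner (x + a *\<^sub>C y) (x + a *\<^sub>C y) = cinner x x + cnj a * cinner x y + a * cinner y x + a * cnj a * cinner y y"
    by (simp add: cinner_add_left cinner_add_right cinner_scaleC_left cinner_scaleC_right algebra_simps)
  also have "a * cnj a = complex_of_real ((cmod a)^2)" by (rule complex_norm_square[symmetric])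
  finally show ?thesis
    by (simp only: cinner_self cinner_commute[of y x] of_real_mult)
qed

lemma norm_sq_expand: "(norm (x + a *\<^sub>C y :: 'a::complex_inner))^2
   = (norm x)^2 + 2 * Re (cnj a * cinner x y) + (cmod a)^2 * (norm y)^2"
proof -
  have "complex_of_real ((norm (x + a *\<^sub>C y))^2) = complex_of_real ((norm x)^2) + cnj a * cinner x y + a * cnj (cinner x y)
     + complex_of_real ((cmod a)^2 * (norm y)^2)" using expand cinner_self by metis
  then have "(norm (x + a *\<^sub>C y))^2 = Re (complex_of_real ((norm x)^2) + cnj a * cinner x y + a * cnj (cinner x y)
     + complex_of_real ((cmod a)^2 * (norm y)^2))" by (metis Re_complex_of_real)
  then show ?thesis by simp
qed

lemma cauchy_schwarz: "cmod (cinner (x::'a::complex_inner) y) \<le> norm x * norm y"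
proof (cases "y = 0")
  case True then show ?thesis by simp
next
  case False
  define c where "c = cinner x y"
  define n where "n = (norm y)^2"
  have n: "n > 0" using False by (simp add: n_def)
  define a where "a = - c / complex_of_real n"
  have "0 \<le> (norm (x + a *\<^sub>C y))^2" by simp
  also have "\<dots> = (norm x)^2 + 2 * Re (cnj a * c) + (cmod a)^2 * n"
    by (simp add: norm_sq_expand c_def n_def)
  also have "cnj a * c = - complex_of_real ((cmod c)^2 / n)"
  proof -
    have "cnj a * c = - (c * cnj c) / complex_of_real n" by (simp add: a_def)
    also have "\<dots> = - complex_of_real ((cmod c)^2) / complex_of_real n"
      by (simp only: complex_norm_square)
    finally show ?thesis by simp
  qed
  also have "(cmod a)^2 = (cmod c)^2 / n^2" using n
    by (simp add: a_def norm_divide power_divide)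
  finally have "0 \<le> (norm x)^2 - 2 * ((cmod c)^2 / n) + (cmod c)^2 / n^2 * n" by simp
  also have "(cmod c)^2 / n^2 * n = (cmod c)^2 / n" using n by (simp add: power2_eq_square)
  finally have "(cmod c)^2 / n \<le> (norm x)^2" by simp
  then have "(cmod c)^2 \<le> (norm x)^2 * n" using n by (simp add: divide_le_eq)
  then have "(cmod c)^2 \<le> (norm x * norm y)^2" by (simp add: n_def power_mult_distrib)
  then show ?thesis unfolding c_def
    by (rule power2_le_imp_le) simp
qed



lemma riesz:
  fixes f :: "'a::{complex_inner,complete_space} \<Rightarrow> complex"
  assumes add: "\<And>x y. f (x + y) = f x + f y"
    and sc: "\<And>c x. f (c *\<^sub>C x) = c * f x"
    and bd: "\<And>x. cmod (f x) \<le> K * norm x"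
  shows "\<exists>z. \<forall>x. f x = cinner x z"
proof (cases "\<forall>x. f x = 0")
  case True
  then show ?thesis by (intro exI[of _ 0]) simp
next
  case False
  then obtain x0 where x0: "f x0 \<noteq> 0" by blast
  have f0: "f 0 = 0" using add[of 0 0] by simp
  have fR: "f (r *\<^sub>R x) = complex_of_real r * f x" for r x
    using sc[of "complex_of_real r" x] by (simp add: scaleC_of_real)
  have fminus: "f (- x) = - f x" for x using add[of x "-x"] f0
    by (simp add: eq_neg_iff_add_eq_0 add.commute)
  have fdiff: "f (x - y) = f x - f y" for x y
    using add[of x "-y"] fminus[of y] by simp
  have K: "K > 0"
  proof -
    have "0 < cmod (f x0)" using x0 by simp
    also have "\<dots> \<le> K * norm x0" by (rule bd)
    finally show ?thesis using zero_less_mult_pos2 norm_ge_zero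
      by (metis not_le mult_nonpos_nonneg)
  qed
  define S where "S = (\<lambda>x. Re (f x)) ` {x. norm x \<le> 1}"
  define M where "M = Sup S"
  have Sne: "S \<noteq> {}" unfolding S_def by (auto intro: exI[of _ 0])
  have Sbdd: "bdd_above S" unfolding S_def
  proof (rule bdd_aboveI2)
    fix x :: 'a assume "x \<in> {x. norm x \<le> (1::real)}"
    then have "norm x \<le> 1" by simp
    have "Re (f x) \<le> cmod (f x)" by (rule complex_Re_le_cmod)
    also have "\<dots> \<le> K * norm x" by (rule bd)
    also have "\<dots> \<le> K" using K \<open>norm x \<le> 1\<close> by (simp add: mult_le_cancel_left1)
    finally show "Re (f x) \<le> K" .
  qed
  have leM: "Re (f y) \<le> M * norm y" for y
  proof (cases "y = 0")
    case True then show ?thesis by (simp add: f0)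
  next
    case False
    let ?y = "(1 / norm y) *\<^sub>R y"
    have "norm ?y \<le> 1" using False by simp
    then have "Re (f ?y) \<le> M" unfolding M_def S_def
      by (intro cSup_upper) (use Sbdd S_def in auto)
    moreover have "Re (f ?y) = Re (f y) / norm y" by (simp add: fR)
    ultimately show ?thesis using False by (simp add: divide_le_eq mult.commute)
  qed
  have Mpos: "M > 0"
  proof -
    let ?y = "cnj (f x0) *\<^sub>C x0"
    have "f ?y = complex_of_real ((cmod (f x0))^2)"
      using sc[of "cnj (f x0)" x0] complex_norm_square[of "f x0"] by (simp only: mult.commute)
    then have "Re (f ?y) > 0" using x0 by simp
    then have "0 < M * norm ?y" using leM[of ?y] by linarith
    then show ?thesis by (simp add: zero_less_mult_iff)
  qed
  have "\<forall>n. \<exists>x. norm x \<le> 1 \<and> M - inverse (real (Suc n)) < Re (f x)"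
  proof
    fix n
    have "M - inverse (real (Suc n)) < M" by simp
    then obtain s where "s \<in> S" "M - inverse (real (Suc n)) < s"
      unfolding M_def using less_cSup_iff[OF Sne Sbdd] by blast
    then show "\<exists>x. norm x \<le> 1 \<and> M - inverse (real (Suc n)) < Re (f x)"
      unfolding S_def by auto
  qed
  then obtain xs where xs1: "\<And>n. norm (xs n) \<le> 1"
    and xs2: "\<And>n. M - inverse (real (Suc n)) < Re (f (xs n))" by metis
  have key: "(norm (xs m - xs n))^2 \<le> 4 * (inverse (real (Suc m)) + inverse (real (Suc n))) / M" for m n
  proof -
    define \<eta> where "\<eta> = (inverse (real (Suc m)) + inverse (real (Suc n))) / M"
    have eta: "\<eta> \<ge> 0" using Mpos by (simp add: \<eta>_def)
    have "2 * M - \<eta> * M < Re (f (xs m + xs n))"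
      using xs2[of m] xs2[of n] Mpos by (simp add: add \<eta>_def)
    also have "\<dots> \<le> M * norm (xs m + xs n)" by (rule leM)
    finally have s: "2 - \<eta> < norm (xs m + xs n)" using Mpos
      by (simp add: algebra_simps) (metis mult_less_cancel_left_pos mult.commute distrib_left diff_less_eq add.commute)
    have par: "(norm (xs m - xs n))^2 = 2 * (norm (xs m))^2 + 2 * (norm (xs n))^2 - (norm (xs m + xs n))^2"
      using norm_sq_expand[of "xs m" 1 "xs n"] norm_sq_expand[of "xs m" "-1" "xs n"]
      by (simp add: scaleC_one scaleC_minus_left)
    have "(norm (xs m))^2 \<le> 1" "(norm (xs n))^2 \<le> 1"
      using xs1[of m] xs1[of n] by (simp_all add: power_le_one)
    then have a: "(norm (xs m - xs n))^2 \<le> 4 - (norm (xs m + xs n))^2" using par by linarith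
    show ?thesis
    proof (cases "2 - \<eta> \<ge> 0")
      case True
      then have "(2 - \<eta>)^2 \<le> (norm (xs m + xs n))^2"
        using s by (intro power_mono) auto
      then have "(norm (xs m - xs n))^2 \<le> 4 * \<eta> - \<eta>^2" using a
        by (simp add: power2_eq_square algebra_simps)
      then show ?thesis using eta by (simp add: \<eta>_def) (smt (verit) zero_le_power2)
    next
      case False
      have "(norm (xs m - xs n))^2 \<le> 4" using a zero_le_power2[of "norm (xs m + xs n)"] by linarith
      moreover have "4 * (inverse (real (Suc m)) + inverse (real (Suc n))) / M = 4 * \<eta>"
        by (simp add: \<eta>_def)
      ultimately show ?thesis using False by linarith
    qed
  qed
  have "Cauchy xs"
  proof (rule metric_CauchyI)
    fix e :: real assume e: "e > 0"
    obtain N where N0: "inverse (real (Suc N)) < e^2 * M / 8"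
      using reals_Archimedean[of "e^2 * M / 8"] e Mpos by auto
    then have N: "8 * inverse (real (Suc N)) < e^2 * M" by simp
    show "\<exists>N. \<forall>m\<ge>N. \<forall>n\<ge>N. dist (xs m) (xs n) < e"
    proof (intro exI allI impI)
      fix m n assume mn: "N \<le> m" "N \<le> n"
      have "inverse (real (Suc m)) \<le> inverse (real (Suc N))"
        using mn by (simp add: le_imp_inverse_le)
      moreover have "inverse (real (Suc n)) \<le> inverse (real (Suc N))"
        using mn by (simp add: le_imp_inverse_le)
      ultimately have "4 * (inverse (real (Suc m)) + inverse (real (Suc n))) < e^2 * M"
        using N Mpos by (smt (verit))
      then have "4 * (inverse (real (Suc m)) + inverse (real (Suc n))) / M < e^2"
        using Mpos by (simp add: divide_less_eq)
      then have "(norm (xs m - xs n))^2 < e^2" using key[of m n] by linarith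
      then have "norm (xs m - xs n) < e" using e by (simp add: power_less_imp_less_base)
      then show "dist (xs m) (xs n) < e" by (simp add: dist_norm)
    qed
  qed
  then obtain x where lim: "xs \<longlonglongrightarrow> x" using convergent_def Cauchy_convergent_iff by blast
  have nx1: "norm x \<le> 1"
    using tendsto_norm[OF lim] xs1 by (intro LIMSEQ_le_const2) auto
  have flim: "(\<lambda>n. Re (f (xs n))) \<longlonglongrightarrow> Re (f x)"
  proof -
    have "(\<lambda>n. norm (xs n - x)) \<longlonglongrightarrow> 0" using lim by (simp add: LIM_zero_iff tendsto_norm_zero)
    then have z: "(\<lambda>n. K * norm (xs n - x)) \<longlonglongrightarrow> 0" by (simp add: tendsto_mult_right_zero)
    have "(\<lambda>n. Re (f (xs n)) - Re (f x)) \<longlonglongrightarrow> 0"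
    proof (rule Lim_null_comparison[OF _ z])
      show "\<forall>\<^sub>F n in sequentially. norm (Re (f (xs n)) - Re (f x)) \<le> K * norm (xs n - x)"
      proof (intro always_eventually allI)
        fix n
        have "norm (Re (f (xs n)) - Re (f x)) = \<bar>Re (f (xs n - x))\<bar>" by (simp add: fdiff)
        also have "\<dots> \<le> cmod (f (xs n - x))" by (rule abs_Re_le_cmod)
        also have "\<dots> \<le> K * norm (xs n - x)" by (rule bd)
        finally show "norm (Re (f (xs n)) - Re (f x)) \<le> K * norm (xs n - x)" .
      qed
    qed
    then show ?thesis by (simp add: LIM_zero_iff)
  qed
  have "M \<le> Re (f x)"
  proof (rule LIMSEQ_le[OF _ flim])
    show "(\<lambda>n. M + - inverse (real (Suc n))) \<longlonglongrightarrow> M"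
      using tendsto_add[OF tendsto_const tendsto_minus[OF LIMSEQ_inverse_real_of_nat], of M] by simp
    show "\<exists>N. \<forall>n\<ge>N. M + - inverse (real (Suc n)) \<le> Re (f (xs n))"
      using xs2 by (auto intro!: exI[of _ 0] less_imp_le)
  qed
  note ge = this
  have a: "M * norm x \<le> M" using nx1 Mpos mult_left_mono[of "norm x" 1 M] by simp
  then have Mx: "Re (f x) = M" using leM[of x] ge by linarith
  have "M * 1 \<le> M * norm x" using leM[of x] ge by simp
  then have "1 \<le> norm x" using Mpos by (simp only: mult_le_cancel_left_pos)
  then have nx: "norm x = 1" using nx1 by simp
  have fx0: "f x \<noteq> 0" using Mx Mpos by auto
  have orth: "cinner x y = 0" if fy: "f y = 0" for y
  proof -
    define c where "c = cinner x y"
    define s where "s = 1 / ((norm y)^2 + 1)"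
    have p: "(norm y)^2 + 1 > 0" by (simp add: add_nonneg_pos)
    have s: "s > 0" "s * (norm y)^2 < 1" using p by (auto simp: s_def field_simps)
    define t where "t = - complex_of_real s * c"
    have "M = Re (f (x + t *\<^sub>C y))" using Mx fy by (simp add: add sc)
    also have "\<dots> \<le> M * norm (x + t *\<^sub>C y)" by (rule leM)
    finally have "1 \<le> norm (x + t *\<^sub>C y)" using Mpos by simp
    then have "1 \<le> (norm (x + t *\<^sub>C y))^2" by (simp add: one_le_power)
    also have "\<dots> = 1 + 2 * Re (cnj t * c) + (cmod t)^2 * (norm y)^2"
      by (simp add: norm_sq_expand c_def nx)
    also have "cnj t * c = - complex_of_real (s * (cmod c)^2)"
      using complex_norm_square[of c] by (simp add: t_def mult.assoc mult.commute)
    also have "(cmod t)^2 = s^2 * (cmod c)^2" using s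
      by (simp add: t_def norm_mult power_mult_distrib)
    finally have "0 \<le> (cmod c)^2 * s * (s * (norm y)^2 - 2)"
      by (simp add: power2_eq_square algebra_simps)
    moreover have "s * (norm y)^2 - 2 < 0" using s by simp
    ultimately have "(cmod c)^2 * s \<le> 0"
      using zero_le_mult_iff[of "(cmod c)^2 * s" "s * (norm y)^2 - 2"] by auto
    then have "(cmod c)^2 \<le> 0" using s by (simp add: mult_le_0_iff)
    then show ?thesis by (simp add: c_def)
  qed
  show ?thesis
  proof (intro exI allI)
    fix y
    define y' where "y' = y - (f y / f x) *\<^sub>C x"
    have "f y' = 0" using fx0 by (simp add: y'_def fdiff sc)
    then have "cinner x y' = 0" by (rule orth)
    then have "cinner y' x = 0" by (metis cinner_commute complex_cnj_zero)
    then have "cinner y x = f y / f x"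
      by (simp add: y'_def cinner_diff_left cinner_scaleC_left cinner_self nx)
    then show "f y = cinner y (cnj (f x) *\<^sub>C x)"
      using fx0 by (simp add: cinner_scaleC_right)
  qed
qed



lemma sup_lip:
  fixes g1 g2 :: "'b \<Rightarrow> real"
  assumes ne: "X \<noteq> {}" and d: "\<And>x. x \<in> X \<Longrightarrow> \<bar>g1 x - g2 x\<bar> \<le> \<delta>"
    and b1: "\<And>x. x \<in> X \<Longrightarrow> g1 x \<le> B" and b2: "\<And>x. x \<in> X \<Longrightarrow> g2 x \<le> B"
  shows "\<bar>Sup (g1 ` X) - Sup (g2 ` X)\<bar> \<le> \<delta>"
proof -
  have bd1: "bdd_above (g1 ` X)" by (rule bdd_aboveI2[OF b1])
  have bd2: "bdd_above (g2 ` X)" by (rule bdd_aboveI2[OF b2])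
  have "Sup (g1 ` X) \<le> Sup (g2 ` X) + \<delta>"
  proof (rule cSup_least)
    show "g1 ` X \<noteq> {}" using ne by simp
    fix y assume "y \<in> g1 ` X"
    then obtain x where x: "x \<in> X" "y = g1 x" by auto
    have "g2 x \<le> Sup (g2 ` X)" using x bd2 by (intro cSup_upper) auto
    then show "y \<le> Sup (g2 ` X) + \<delta>" using d[OF x(1)] x by linarith
  qed
  moreover have "Sup (g2 ` X) \<le> Sup (g1 ` X) + \<delta>"
  proof (rule cSup_least)
    show "g2 ` X \<noteq> {}" using ne by simp
    fix y assume "y \<in> g2 ` X"
    then obtain x where x: "x \<in> X" "y = g2 x" by auto
    have "g1 x \<le> Sup (g1 ` X)" using x bd1 by (intro cSup_upper) auto
    then show "y \<le> Sup (g1 ` X) + \<delta>" using d[OF x(1)] x by linarith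
  qed
  ultimately show ?thesis by linarith
qed

lemma inf_lip:
  fixes h1 h2 :: "'b \<Rightarrow> real"
  assumes ne: "X \<noteq> {}" and d: "\<And>x. x \<in> X \<Longrightarrow> \<bar>h1 x - h2 x\<bar> \<le> \<delta>"
    and b1: "\<And>x. x \<in> X \<Longrightarrow> 0 \<le> h1 x" and b2: "\<And>x. x \<in> X \<Longrightarrow> 0 \<le> h2 x"
  shows "\<bar>Inf (h1 ` X) - Inf (h2 ` X)\<bar> \<le> \<delta>"
proof -
  have bd1: "bdd_below (h1 ` X)" by (rule bdd_belowI2[OF b1])
  have bd2: "bdd_below (h2 ` X)" by (rule bdd_belowI2[OF b2])
  have "Inf (h1 ` X) - \<delta> \<le> Inf (h2 ` X)"
  proof (rule cInf_greatest)
    show "h2 ` X \<noteq> {}" using ne by simp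
    fix y assume "y \<in> h2 ` X"
    then obtain x where x: "x \<in> X" "y = h2 x" by auto
    have "Inf (h1 ` X) \<le> h1 x" using x bd1 by (intro cInf_lower) auto
    then show "Inf (h1 ` X) - \<delta> \<le> y" using d[OF x(1)] x by linarith
  qed
  moreover have "Inf (h2 ` X) - \<delta> \<le> Inf (h1 ` X)"
  proof (rule cInf_greatest)
    show "h1 ` X \<noteq> {}" using ne by simp
    fix y assume "y \<in> h1 ` X"
    then obtain x where x: "x \<in> X" "y = h1 x" by auto
    have "Inf (h2 ` X) \<le> h2 x" using x bd2 by (intro cInf_lower) auto
    then show "Inf (h2 ` X) - \<delta> \<le> y" using d[OF x(1)] x by linarith
  qed
  ultimately show ?thesis by linarith
qed

lemma bclin_blin: "bounded_clinear_op (A::'a::complex_inner \<Rightarrow> 'a) \<Longrightarrow> bounded_linear A"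
  unfolding bounded_clinear_op_def
  by (metis bounded_linear_intro scaleC_of_real)

lemma adj:
  fixes A :: "'a::{complex_inner,complete_space} \<Rightarrow> 'a"
  assumes A: "bounded_clinear_op A"
  shows "cinner (A x) y = cinner x (adjoint_op A y)"
proof -
  obtain K where K: "\<And>x. norm (A x) \<le> norm x * K"
    using A unfolding bounded_clinear_op_def by blast
  have "\<forall>y. \<exists>z. \<forall>x. cinner (A x) y = cinner x z"
  proof
    fix y
    show "\<exists>z. \<forall>x. cinner (A x) y = cinner x z"
    proof (rule riesz[where K = "K * norm y"])
      fix x x' show "cinner (A (x + x')) y = cinner (A x) y + cinner (A x') y"
        using A unfolding bounded_clinear_op_def by (simp add: cinner_add_left)
    next
      fix c x show "cinner (A (c *\<^sub>C x)) y = c * cinner (A x) y"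
        using A unfolding bounded_clinear_op_def by (simp add: cinner_scaleC_left)
    next
      fix x
      have "cmod (cinner (A x) y) \<le> norm (A x) * norm y" by (rule cauchy_schwarz)
      also have "\<dots> \<le> (norm x * K) * norm y" using K[of x] by (simp add: mult_right_mono)
      finally show "cmod (cinner (A x) y) \<le> K * norm y * norm x" by (simp add: mult_ac)
    qed
  qed
  then have "\<exists>B. \<forall>y x. cinner (A x) y = cinner x (B y)" by metis
  then have "\<exists>B. \<forall>x y. cinner (A x) y = cinner x (B y)" by blast
  from someI_ex[OF this] show ?thesis unfolding adjoint_op_def by blast
qed

lemma omega_lip:
  fixes A :: "'a::{complex_inner,complete_space} \<Rightarrow> 'a"
  assumes A: "bounded_clinear_op A" and on: "onorm A = 1"
  shows "\<bar>omega_t t p1 q1 A - omega_t t p2 q2 A\<bar> \<le> \<bar>p1 t - p2 t\<bar> + \<bar>q1 t - q2 t\<bar>"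
    and "0 \<le> omega_t t p1 q1 A"
proof -
  have bl: "bounded_linear A" using A by (rule bclin_blin)
  define B where "B = adjoint_op A"
  have ab: "cinner (A x) y = cinner x (B y)" for x y unfolding B_def by (rule adj[OF A])
  define U where "U = {x::'a. norm x = 1}"
  have Ane: "\<exists>x. A x \<noteq> 0"
  proof (rule ccontr)
    assume "\<not> ?thesis"
    then have "A = (\<lambda>x. 0)" by auto
    then have "onorm A = 0" by (simp add: onorm_zero)
    then show False using on by simp
  qed
  then obtain x0 where "A x0 \<noteq> 0" by blast
  then have "x0 \<noteq> 0" using bl linear_0 bounded_linear.linear by metis
  then have "(1 / norm x0) *\<^sub>R x0 \<in> U" by (simp add: U_def)
  then have Une: "U \<noteq> {}" by blast
  have aA: "cmod (cinner (A x) x) \<le> 1" if "x \<in> U" for x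
  proof -
    have "cmod (cinner (A x) x) \<le> norm (A x) * norm x" by (rule cauchy_schwarz)
    also have "\<dots> \<le> 1" using onorm[OF bl, of x] on that by (simp add: U_def)
    finally show ?thesis .
  qed
  have aB: "cmod (cinner (B x) x) \<le> 1" if "x \<in> U" for x
  proof -
    have "cinner (B x) x = cnj (cinner (A x) x)" using ab[of x x] by (metis cinner_commute)
    then show ?thesis using aA[OF that] by simp
  qed
  define g where "g = (\<lambda>a b x. cmod (cinner (a *\<^sub>R A x + b *\<^sub>R B x) x))"
  have g: "g a b x = cmod (complex_of_real a * cinner (A x) x + complex_of_real b * cinner (B x) x)" for a b x
    by (simp add: g_def cinner_add_left cinner_scaleR_left)
  have om: "omega_t t p q A = Sup ((g (p t) (q t)) ` U)" for p q
    unfolding omega_t_def g_def U_def B_def by (intro arg_cong[where f=Sup]) auto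
  have gb: "g a b x \<le> \<bar>a\<bar> + \<bar>b\<bar>" if "x \<in> U" for a b x
  proof -
    have "g a b x \<le> cmod (complex_of_real a * cinner (A x) x) + cmod (complex_of_real b * cinner (B x) x)"
      unfolding g by (rule norm_triangle_ineq)
    also have "\<dots> \<le> \<bar>a\<bar> * 1 + \<bar>b\<bar> * 1" using aA[OF that] aB[OF that]
      by (intro add_mono) (simp_all add: norm_mult mult_left_le)
    finally show ?thesis by simp
  qed
  show "\<bar>omega_t t p1 q1 A - omega_t t p2 q2 A\<bar> \<le> \<bar>p1 t - p2 t\<bar> + \<bar>q1 t - q2 t\<bar>"
    unfolding om
  proof (rule sup_lip[OF Une])
    fix x assume x: "x \<in> U"
    have "\<bar>g (p1 t) (q1 t) x - g (p2 t) (q2 t) x\<bar> \<le>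
      cmod ((complex_of_real (p1 t) * cinner (A x) x + complex_of_real (q1 t) * cinner (B x) x)
          - (complex_of_real (p2 t) * cinner (A x) x + complex_of_real (q2 t) * cinner (B x) x))"
      unfolding g by (rule norm_triangle_ineq3)
    also have "\<dots> = cmod (complex_of_real (p1 t - p2 t) * cinner (A x) x + complex_of_real (q1 t - q2 t) * cinner (B x) x)"
      by (simp add: algebra_simps)
    also have "\<dots> \<le> cmod (complex_of_real (p1 t - p2 t) * cinner (A x) x) + cmod (complex_of_real (q1 t - q2 t) * cinner (B x) x)"
      by (rule norm_triangle_ineq)
    also have "\<dots> \<le> \<bar>p1 t - p2 t\<bar> * 1 + \<bar>q1 t - q2 t\<bar> * 1" using aA[OF x] aB[OF x]
      by (intro add_mono) (simp_all add: norm_mult mult_left_le del: of_real_diff)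
    finally show "\<bar>g (p1 t) (q1 t) x - g (p2 t) (q2 t) x\<bar> \<le> \<bar>p1 t - p2 t\<bar> + \<bar>q1 t - q2 t\<bar>" by simp
  next
    fix x assume "x \<in> U" then show "g (p1 t) (q1 t) x \<le> \<bar>p1 t\<bar> + \<bar>q1 t\<bar> + (\<bar>p2 t\<bar> + \<bar>q2 t\<bar>)"
      using gb[of x "p1 t" "q1 t"] by simp
  next
    fix x assume "x \<in> U" then show "g (p2 t) (q2 t) x \<le> \<bar>p1 t\<bar> + \<bar>q1 t\<bar> + (\<bar>p2 t\<bar> + \<bar>q2 t\<bar>)"
      using gb[of x "p2 t" "q2 t"] by simp
  qed
  obtain u where u: "u \<in> U" using Une by blast
  have "g (p1 t) (q1 t) u \<le> Sup ((g (p1 t) (q1 t)) ` U)"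
    using u gb by (intro cSup_upper) (auto intro!: bdd_aboveI2)
  moreover have "0 \<le> g (p1 t) (q1 t) u" by (simp add: g_def)
  ultimately show "0 \<le> omega_t t p1 q1 A" unfolding om by linarith
qed

lemma num_lip:
  fixes H :: "'a::{complex_inner,complete_space} itself"
  shows "\<bar>num_index_t H t p1 q1 - num_index_t H t p2 q2\<bar> \<le> \<bar>p1 t - p2 t\<bar> + \<bar>q1 t - q2 t\<bar>"
proof -
  define X where "X = {A::'a\<Rightarrow>'a. bounded_clinear_op A \<and> onorm A = 1}"
  have n: "num_index_t H t p q = Inf ((\<lambda>A. omega_t t p q A) ` X)" for p q
    unfolding num_index_t_def X_def by (intro arg_cong[where f=Inf]) auto
  show ?thesis
  proof (cases "X = {}")
    case True then show ?thesis unfolding n by simp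
  next
    case False
    show ?thesis unfolding n
      by (rule inf_lip[OF False]) (auto simp: X_def intro: omega_lip)
  qed
qed

theorem theorem4p8:
  fixes H :: "'a::{complex_inner, complete_space} itself"
  shows "(\<forall>\<phi>1 \<phi>2 \<psi>1 \<psi>2 :: real \<Rightarrow> real.
            continuous_on {0..1} \<phi>1 \<longrightarrow> continuous_on {0..1} \<phi>2 \<longrightarrow>
            continuous_on {0..1} \<psi>1 \<longrightarrow> continuous_on {0..1} \<psi>2 \<longrightarrow>
            (\<forall>t\<in>{0..1}.
               \<bar>num_index_t H t \<phi>1 \<psi>1 - num_index_t H t \<phi>2 \<psi>2\<bar>
                 \<le> \<bar>\<phi>1 t - \<phi>2 t\<bar> + \<bar>\<psi>1 t - \<psi>2 t\<bar>))
       \<and> (\<forall>(\<phi>::real \<Rightarrow> real) (\<psi>::real \<Rightarrow> real) (\<phi>s::nat \<Rightarrow> real \<Rightarrow> real) (\<psi>s::nat \<Rightarrow> real \<Rightarrow> real).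
            continuous_on {0..1} \<phi> \<longrightarrow> continuous_on {0..1} \<psi> \<longrightarrow>
            (\<forall>n. continuous_on {0..1} (\<phi>s n)) \<longrightarrow> (\<forall>n. continuous_on {0..1} (\<psi>s n)) \<longrightarrow>
            (\<forall>t\<in>{0..1}. (\<lambda>n. \<phi>s n t) \<longlonglongrightarrow> \<phi> t) \<longrightarrow>
            (\<forall>t\<in>{0..1}. (\<lambda>n. \<psi>s n t) \<longlonglongrightarrow> \<psi> t) \<longrightarrow>
            (\<forall>t\<in>{0..1}. (\<lambda>n. num_index_t H t (\<phi>s n) (\<psi>s n)) \<longlonglongrightarrow> num_index_t H t \<phi> \<psi>))"
  proof (intro conjI allI impI ballI)
  fix p1 p2 q1 q2 :: "real \<Rightarrow> real" and t :: real
  show "\<bar>num_index_t H t p1 q1 - num_index_t H t p2 q2\<bar> \<le> \<bar>p1 t - p2 t\<bar> + \<bar>q1 t - q2 t\<bar>"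
    by (rule num_lip)
next
  fix \<phi> \<psi> :: "real \<Rightarrow> real" and \<phi>s \<psi>s :: "nat \<Rightarrow> real \<Rightarrow> real" and t :: real
  assume l1: "\<forall>t\<in>{0..1}. (\<lambda>n. \<phi>s n t) \<longlonglongrightarrow> \<phi> t"
    and l2: "\<forall>t\<in>{0..1}. (\<lambda>n. \<psi>s n t) \<longlonglongrightarrow> \<psi> t" and t: "t \<in> {0..1}"
  have a: "(\<lambda>n. \<phi>s n t - \<phi> t) \<longlonglongrightarrow> 0" using l1 t by (simp add: LIM_zero)
  have b: "(\<lambda>n. \<psi>s n t - \<psi> t) \<longlonglongrightarrow> 0" using l2 t by (simp add: LIM_zero)
  have z: "(\<lambda>n. \<bar>\<phi>s n t - \<phi> t\<bar> + \<bar>\<psi>s n t - \<psi> t\<bar>) \<longlonglongrightarrow> 0"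
    using tendsto_add[OF tendsto_rabs_zero[OF a] tendsto_rabs_zero[OF b]] by simp
  have "(\<lambda>n. num_index_t H t (\<phi>s n) (\<psi>s n) - num_index_t H t \<phi> \<psi>) \<longlonglongrightarrow> 0"
  proof (rule Lim_null_comparison[OF _ z])
    show "\<forall>\<^sub>F n in sequentially. norm (num_index_t H t (\<phi>s n) (\<psi>s n) - num_index_t H t \<phi> \<psi>)
        \<le> \<bar>\<phi>s n t - \<phi> t\<bar> + \<bar>\<psi>s n t - \<psi> t\<bar>"
      using num_lip by (intro always_eventually allI) simp
  qed
  then show "(\<lambda>n. num_index_t H t (\<phi>s n) (\<psi>s n)) \<longlonglongrightarrow> num_index_t H t \<phi> \<psi>"
    by (simp add: LIM_zero_iff)
qed

end
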